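(* Let $q$ be a power of the prime $p$, $n\ge 2$ and $1\le i\le n$. If $\alpha$ is a root of $s_{n,i}(t)$ in an algebraic closure of $\mathbb{F}_q$ whose multiplicity $m$ satisfies $\gcd(m,p)=1$, then $\alpha\in\mathbb{F}_{q^n}$.
   Context: For a prime power $q$ and integers $n\ge 1$, $0\le i\le n$, the $i$-th $(n,q)$-elementary symmetric polynomial is $s_{n,i}(t)=\sum_{0\le j_1<j_2<\dots<j_i\le n-1} t^{q^{j_1}+q^{j_2}+\dots+q^{j_i}}\in\mathbb{F}_p[t]$ (where $p$ is the characteristic of $\mathbb{F}_q$). By convention $s_{n,0}(t)=1$. *)

theory Defs
  imports "HOL-Computational_Algebra.Polynomial"
begin

text \<open>Its coefficients are 0/1 (integers), so it is defined over any commutative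
  ring with 1; over a field of characteristic p it is the image of the
  polynomial in F_p[t].\<close>

definition qsym :: "nat \<Rightarrow> nat \<Rightarrow> nat \<Rightarrow> 'a::comm_ring_1 poly" where
  "qsym q n i = (\<Sum>J \<in> {J. J \<subseteq> {0..<n} \<and> card J = i}. monom 1 (\<Sum>j\<in>J. q ^ j))"

end

theory Submission
  imports Defs "HOL-Computational_Algebra.Primes"
begin


lemma qsym_0: "qsym q n 0 = 1"
proof -
  have "{J. J \<subseteq> {0..<n} \<and> card J = 0} = {{}}"
    by (auto dest: finite_subset)
  thus ?thesis by (simp add: qsym_def)
qed

lemma qsym_0_Suc: "qsym q 0 (Suc i) = 0"
proof -
  have "{J. J \<subseteq> {0..<0::nat} \<and> card J = Suc i} = {}" by auto
  then show ?thesis unfolding qsym_def by (simp only: sum.empty)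
qed

lemma qsym_top:
  "qsym q (Suc n) (Suc i) = qsym q n (Suc i) + monom 1 (q^n) * (qsym q n i :: 'a::comm_ring_1 poly)"
proof -
  define A1 where "A1 = {J. J \<subseteq> {0..<n} \<and> card J = Suc i}"
  define B where "B = {J. J \<subseteq> {0..<n} \<and> card J = i}"
  have eq: "{J. J \<subseteq> {0..<Suc n} \<and> card J = Suc i} = A1 \<union> insert n ` B"
  proof (intro equalityI subsetI)
    fix J assume J: "J \<in> {J. J \<subseteq> {0..<Suc n} \<and> card J = Suc i}"
    hence fin: "finite J" by (auto dest: finite_subset)
    show "J \<in> A1 \<union> insert n ` B"
    proof (cases "n \<in> J")
      case True
      hence "J = insert n (J - {n})" by auto
      moreover have "J - {n} \<in> B" using J True fin by (auto simp: B_def)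
      ultimately show ?thesis by blast
    next
      case False
      hence "J \<in> A1" using J by (auto simp: A1_def less_Suc_eq)
      thus ?thesis by blast
    qed
  next
    fix J assume "J \<in> A1 \<union> insert n ` B"
    then show "J \<in> {J. J \<subseteq> {0..<Suc n} \<and> card J = Suc i}"
    proof
      assume "J \<in> A1" thus ?thesis by (auto simp: A1_def)
    next
      assume "J \<in> insert n ` B"
      then obtain K where K: "K \<in> B" "J = insert n K" by blast
      hence "finite K" "n \<notin> K" by (auto simp: B_def dest: finite_subset)
      thus ?thesis using K by (auto simp: B_def)
    qed
  qed
  have disj: "A1 \<inter> insert n ` B = {}" by (auto simp: A1_def)
  have finA1: "finite A1" unfolding A1_def
    by (rule finite_subset[of _ "Pow {0..<n}"]) auto
  have finB: "finite B" unfolding B_def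
    by (rule finite_subset[of _ "Pow {0..<n}"]) auto
  have inj: "inj_on (insert n) B"
    proof (rule inj_onI)
    fix x y assume "x \<in> B" "y \<in> B" "insert n x = insert n y"
    moreover have "n \<notin> x" "n \<notin> y" using \<open>x \<in> B\<close> \<open>y \<in> B\<close> by (auto simp: B_def)
    ultimately show "x = y" by (metis Diff_insert_absorb)
  qed
  have "qsym q (Suc n) (Suc i) = (\<Sum>J\<in>A1. monom 1 (\<Sum>j\<in>J. q ^ j)) + (\<Sum>J\<in>insert n ` B. monom (1::'a) (\<Sum>j\<in>J. q ^ j))"
    unfolding qsym_def eq using disj finA1 finB by (simp add: sum.union_disjoint)
  also have "(\<Sum>J\<in>insert n ` B. monom (1::'a) (\<Sum>j\<in>J. q ^ j)) = (\<Sum>J\<in>B. monom 1 (\<Sum>j\<in>insert n J. q ^ j))"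
    using inj by (simp add: sum.reindex)
  also have "\<dots> = (\<Sum>J\<in>B. monom 1 (q^n) * monom 1 (\<Sum>j\<in>J. q ^ j))"
  proof (rule sum.cong)
    fix J assume "J \<in> B"
    hence "finite J" "n \<notin> J" by (auto simp: B_def dest: finite_subset)
    thus "monom (1::'a) (\<Sum>j\<in>insert n J. q ^ j) = monom 1 (q^n) * monom 1 (\<Sum>j\<in>J. q ^ j)"
      by (simp add: mult_monom)
  qed simp
  finally show ?thesis unfolding qsym_def A1_def B_def by (simp add: sum_distrib_left)
qed



lemma frob:
  fixes x y :: "'a::field poly"
  assumes "prime CHAR('a)" "q = CHAR('a) ^ k"
  shows "(x + y) ^ q = x ^ q + y ^ q"
  using assms by (intro freshmans_dream') auto

lemma qsym_bot:
  fixes dummy :: "'a::field"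
  assumes pr: "prime CHAR('a)" and qk: "q = CHAR('a) ^ k" and k: "k \<ge> 1"
  shows "(qsym q (Suc n) (Suc i) :: 'a poly) = monom 1 1 * (qsym q n i) ^ q + (qsym q n (Suc i)) ^ q"
proof (induction n arbitrary: i)
  have q0: "q > 0" using qk pr by (simp add: prime_gt_0_nat)
  case 0
  then show ?case using q0
    by (cases i) (simp_all add: qsym_top qsym_0 qsym_0_Suc power_0_left)
next
  case (Suc n)
  have q0: "q > 0" using qk pr by (simp add: prime_gt_0_nat)
  let ?s = "\<lambda>n i. (qsym q n i :: 'a poly)"
  have M: "monom (1::'a) (q^n) ^ q = monom 1 (q ^ Suc n)"
    by (simp add: monom_power mult.commute)
  have fr: "\<And>x y :: 'a poly. (x + y) ^ q = x ^ q + y ^ q" using frob[OF pr qk] .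
  have top1: "?s (Suc n) (Suc i) ^ q = ?s n (Suc i) ^ q + monom 1 (q ^ Suc n) * ?s n i ^ q"
    by (simp add: qsym_top fr power_mult_distrib M)
  show ?case
  proof (cases i)
    case 0
    then show ?thesis using top1 Suc.IH[of 0] by (simp add: qsym_top qsym_0 algebra_simps)
  next
    case (Suc i')
    have top2: "?s (Suc n) i ^ q = ?s n i ^ q + monom 1 (q ^ Suc n) * ?s n i' ^ q"
      using Suc by (simp add: qsym_top fr power_mult_distrib M)
    have "?s (Suc (Suc n)) (Suc i) = ?s (Suc n) (Suc i) + monom 1 (q ^ Suc n) * ?s (Suc n) i"
      by (simp add: qsym_top)
    also have "\<dots> = monom 1 1 * ?s n i ^ q + ?s n (Suc i) ^ q + monom 1 (q ^ Suc n) * (monom 1 1 * ?s n i' ^ q + ?s n i ^ q)"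
      using Suc.IH[of i] Suc.IH[of i'] Suc by simp
    also have "\<dots> = monom 1 1 * ?s (Suc n) i ^ q + ?s (Suc n) (Suc i) ^ q"
      unfolding top1 top2 by (simp add: algebra_simps)
    finally show ?thesis .
  qed
qed

lemma qsym_degree:
  assumes "q \<ge> 2"
  shows "degree (qsym q n i :: 'a::field poly) < q ^ n"
proof (induction n arbitrary: i)
  case 0
  then show ?case using assms by (cases i) (simp_all add: qsym_0 qsym_0_Suc)
next
  case (Suc n)
  show ?case
  proof (cases i)
    case 0 then show ?thesis using assms by (simp add: qsym_0)
  next
    case (Suc i')
    have "degree (monom (1::'a) (q^n) * qsym q n i') \<le> q^n + degree (qsym q n i' :: 'a poly)"
      by (rule order_trans[OF degree_mult_le]) (simp add: degree_monom_le)
    also have "\<dots> < q^n + q^n" using Suc.IH by simp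
    also have "\<dots> = 2 * q ^ n" by simp
    also have "\<dots> \<le> q ^ Suc n" using assms by (simp add: mult_right_mono)
    finally have a: "degree (monom (1::'a) (q^n) * qsym q n i') < q ^ Suc n" .
    have b: "degree (qsym q n i :: 'a poly) < q ^ Suc n"
    proof -
      have "q^n \<le> q^Suc n" using assms by (intro power_increasing) auto
      thus ?thesis using Suc.IH[of i] by linarith
    qed
    show ?thesis unfolding Suc qsym_top
      using degree_add_less[OF b a] Suc by simp
  qed
qed

lemma qsym_nonzero:
  assumes "q \<ge> 2" "i \<le> n"
  shows "(qsym q n i :: 'a::field poly) \<noteq> 0"
  using assms(2)
proof (induction n arbitrary: i)
  case 0 then show ?case by (simp add: qsym_0)
next
  case (Suc n)
  show ?case
  proof (cases i)
    case 0 then show ?thesis by (simp add: qsym_0)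
  next
    case (Suc i')
    have nz: "(qsym q n i' :: 'a poly) \<noteq> 0" using Suc.IH[of i'] Suc Suc.prems by simp
    have d: "degree (monom (1::'a) (q^n) * qsym q n i') = q^n + degree (qsym q n i' :: 'a poly)"
      using nz by (simp add: degree_mult_eq degree_monom_eq)
    have "degree (qsym q n i :: 'a poly) < degree (monom (1::'a) (q^n) * qsym q n i')"
    proof -
      have "degree (qsym q n i :: 'a poly) < q^n" by (rule qsym_degree[OF assms(1)])
      thus ?thesis unfolding d by linarith
    qed
    hence "degree (qsym q n i + monom (1::'a) (q^n) * qsym q n i') = q^n + degree (qsym q n i' :: 'a poly)"
      using d by (simp add: degree_add_eq_right)
    moreover have "q^n > 0" using assms by simp
    ultimately have "qsym q n i + monom (1::'a) (q^n) * qsym q n i' \<noteq> 0"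
      by (metis degree_0 not_gr0 add_is_0)
    thus ?thesis unfolding Suc qsym_top .
  qed
qed



lemma qsym_key:
  fixes dummy :: "'a::field"
  assumes pr: "prime CHAR('a)" and qk: "q = CHAR('a) ^ k" and k: "k \<ge> 1"
  shows "(qsym q (Suc n) (Suc i) :: 'a poly) ^ q - qsym q (Suc n) (Suc i)
           = (monom 1 (q ^ Suc n) - monom 1 1) * qsym q n i ^ q"
    and "pderiv (qsym q (Suc n) (Suc i) :: 'a poly) = qsym q n i ^ q"
proof -
  let ?s = "\<lambda>n i. (qsym q n i :: 'a poly)"
  have M: "monom (1::'a) (q^n) ^ q = monom 1 (q ^ Suc n)"
    by (simp add: monom_power mult.commute)
  have fr: "\<And>x y :: 'a poly. (x + y) ^ q = x ^ q + y ^ q" using frob[OF pr qk] .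
  have top1: "?s (Suc n) (Suc i) ^ q = ?s n (Suc i) ^ q + monom 1 (q ^ Suc n) * ?s n i ^ q"
    by (simp add: qsym_top fr power_mult_distrib M)
  have bot: "?s (Suc n) (Suc i) = monom 1 1 * ?s n i ^ q + ?s n (Suc i) ^ q"
    by (rule qsym_bot[OF pr qk k])
  show "?s (Suc n) (Suc i) ^ q - ?s (Suc n) (Suc i) = (monom 1 (q ^ Suc n) - monom 1 1) * ?s n i ^ q"
  proof -
    have "?s (Suc n) (Suc i) ^ q - ?s (Suc n) (Suc i) = (?s n (Suc i) ^ q + monom 1 (q ^ Suc n) * ?s n i ^ q) - (monom 1 1 * ?s n i ^ q + ?s n (Suc i) ^ q)"
      by (rule arg_cong2[where f = minus, OF top1 bot])
    thus ?thesis by (simp add: algebra_simps)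
  qed
  have oq: "(of_nat q :: 'a) = 0"
    using qk k by (simp add: of_nat_eq_0_iff_char_dvd)
  have dz: "\<And>f :: 'a poly. pderiv (f ^ q) = 0"
    by (simp add: pderiv_power oq)
  show "pderiv (?s (Suc n) (Suc i)) = ?s n i ^ q"
    by (subst bot) (simp add: pderiv_add pderiv_mult dz pderiv_monom)
qed

theorem lemma3p8:
  fixes p q k n i m :: nat and \<alpha> :: "'a::alg_closed_field"
  assumes "prime p"
    and "CHAR('a) = p"
    and "k \<ge> 1" and "q = p ^ k"
    and "n \<ge> 2" and "1 \<le> i" and "i \<le> n"
    and "poly (qsym q n i) \<alpha> = 0"
    and "m = order \<alpha> (qsym q n i)"
    and "coprime m p"
  shows "\<alpha> ^ (q ^ n) = \<alpha>"
proof -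
  have pr: "prime CHAR('a)" and qk: "q = CHAR('a) ^ k" using assms by auto
  have q2: "q \<ge> 2"
  proof -
    have "p \<ge> 2" using assms(1) by (simp add: prime_ge_2_nat)
    hence "p ^ 1 \<le> p ^ k" using assms(3) by (intro power_increasing) auto
    thus ?thesis using \<open>p \<ge> 2\<close> assms(4) by simp
  qed
  obtain n' where n': "n = Suc n'" using assms(5) by (cases n) auto
  obtain i' where i': "i = Suc i'" using assms(6) by (cases i) auto
  define S where "S = (qsym q n i :: 'a poly)"
  define L where "L = [:-\<alpha>, 1:]"
  have Snz: "S \<noteq> 0" unfolding S_def by (rule qsym_nonzero[OF q2 assms(7)])
  have m0: "m \<noteq> 0" using assms(8,9) Snz order_root unfolding S_def by blast
  then obtain m' where m': "m = Suc m'" by (cases m) auto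
  obtain g where g: "S = L ^ m * g" "\<not> L dvd g"
    using order_decomp[OF Snz, of \<alpha>] assms(9) unfolding S_def L_def by auto
  have ga: "poly g \<alpha> \<noteq> 0" using g(2) unfolding L_def by (simp add: poly_eq_0_iff_dvd)
  have mnz: "(of_nat m :: 'a) \<noteq> 0"
  proof
    assume "(of_nat m :: 'a) = 0"
    hence "p dvd m" using assms(2) by (simp add: of_nat_eq_0_iff_char_dvd)
    thus False using assms(1,10) coprime_common_divisor[of m p p] not_prime_unit by auto
  qed
  define Y where "Y = (monom 1 (q ^ n) - monom 1 1 :: 'a poly)"
  define u where "u = (qsym q n' i' :: 'a poly) ^ q"
  have id1: "S ^ q - S = Y * u" unfolding S_def Y_def u_def n' i' by (rule qsym_key(1)[OF pr qk assms(3)])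
  have id2: "pderiv S = u" unfolding S_def u_def n' i' by (rule qsym_key(2)[OF pr qk assms(3)])
  have dL: "pderiv L = 1" unfolding L_def by (simp add: pderiv_pCons)
  have dS: "pderiv S = L ^ m' * (smult (of_nat m) g + L * pderiv g)"
  proof -
    have pl: "pderiv (L ^ Suc m') = smult (of_nat (Suc m')) (L ^ m')"
      by (simp only: pderiv_power_Suc dL mult_1_right)
    have "pderiv S = L ^ Suc m' * pderiv g + g * pderiv (L ^ Suc m')"
      unfolding g(1) m' by (rule pderiv_mult)
    also have "\<dots> = L ^ m' * (smult (of_nat m) g + L * pderiv g)"
      unfolding pl m' by (simp add: algebra_simps)
    finally show ?thesis .
  qed
  obtain r where qr: "q = Suc r" using q2 by (cases q) auto
  have "L ^ m' * (L * g * (S ^ r - 1)) = S * (S ^ r - 1)" unfolding g(1) m' by (simp add: algebra_simps)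
  also have "\<dots> = S ^ q - S" unfolding qr by (simp add: algebra_simps)
  also have "\<dots> = Y * pderiv S" using id1 id2 by simp
  also have "\<dots> = L ^ m' * (Y * (smult (of_nat m) g + L * pderiv g))" unfolding dS by (simp only: mult.left_commute)
  finally have "L ^ m' * (L * g * (S ^ r - 1)) = L ^ m' * (Y * (smult (of_nat m) g + L * pderiv g))" .
  moreover have "L ^ m' \<noteq> 0" unfolding L_def by simp
  ultimately have eq: "L * g * (S ^ r - 1) = Y * (smult (of_nat m) g + L * pderiv g)"
    using mult_left_cancel by blast
  have "poly (L * g * (S ^ r - 1)) \<alpha> = 0" unfolding L_def by simp
  hence "poly Y \<alpha> * (of_nat m * poly g \<alpha>) = 0" unfolding eq by (simp add: L_def)
  hence "poly Y \<alpha> = 0" using mnz ga by simp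
  thus ?thesis unfolding Y_def by (simp add: poly_monom)
qed

end
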